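(* Let $\mathcal{P}$ be the class of unimodal probability measures on $\mathbb{R}$ (with its Borel $\sigma$-algebra) that admit a smooth and bounded density. Then the mode functional $\Gamma_{\text{mode}}:\mathcal{P}\to\mathbb{R}$ has infinite identifiable elicitation complexity with respect to $\mathcal{P}$. That is, there is no $k\in\mathbb{N}$ for which there exist a property $\hat\Gamma:\mathcal{P}\to\mathbb{R}^k$ that is both elicitable and identifiable, and a function $f:\mathbb{R}^k\to\mathbb{R}$ with $\Gamma_{\text{mode}}=f\circ\hat\Gamma$.
   Context: A property on a class $\mathcal{P}$ of probability measures on $(\mathcal{Y},\mathcal{F})$ is a map $\Gamma:\mathcal{P}\to\mathcal{R}$. A property $\Gamma:\mathcal{P}\to\mathcal{R}$ is elicitable if there is a loss function $L:\mathcal{R}\times\mathcal{Y}\to\mathbb{R}$ with $\{\Gamma(P)\}=\arg\min_r E_P L(r,Y)$ for every $P\in\mathcal{P}$. A property $\Gamma:\mathcal{P}\to\mathcal{R}\subseteq\mathbb{R}^k$ is identifiable if there is an identification function $V:\mathcal{R}\times\mathcal{Y}\to\mathbb{R}^k$ such that for all $P\in\mathcal{P}$ and $r\in\mathcal{R}$, $\Gamma(P)=r$ if and only if $E_P V(r,Y)=0$. The identifiable elicitation complexity of $\Gamma$ is the least $k$ such that $\Gamma=f\circ\hat\Gamma$ for some $\hat\Gamma:\mathcal{P}\to\mathbb{R}^k$ that is elicitable and identifiable and some $f:\mathbb{R}^k\to\mathcal{R}$; it is infinite if no such $k$ exists. Mode: for $P$ with distribution function $F$ and $\varepsilon>0$,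 a modal midpoint $\Gamma_\varepsilon(P)$ is any $x\in\arg\max_x\big(F(x+\varepsilon)-\lim_{z\uparrow x-\varepsilon}F(z)\big)$. If there is a sequence $\varepsilon_n\to0$ and a choice of modal midpoints $\Gamma_{\varepsilon_n}(P)$ converging to a real number, that limit is a mode of $P$ (for a continuous density it is the global maximizer of the density). $P$ is called unimodal if its mode is well-defined and unique; $\Gamma_{\text{mode}}(P)$ denotes this unique mode. *)

theory Defs
  imports "HOL-Probability.Probability"
begin

definition smooth_fun :: "(real \<Rightarrow> real) \<Rightarrow> bool" where
  "smooth_fun d \<longleftrightarrow> (\<forall>n x. ((deriv ^^ n) d) differentiable (at x))"

definition has_smooth_bounded_density :: "real measure \<Rightarrow> bool" where
  "has_smooth_bounded_density M \<longleftrightarrow>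
     (\<exists>d. smooth_fun d \<and> bounded (range d) \<and> (\<forall>x. 0 \<le> d x) \<and>
          M = density lborel (\<lambda>x. ennreal (d x)))"

definition modal_midpoints :: "real measure \<Rightarrow> real \<Rightarrow> real set" where
  "modal_midpoints M \<epsilon> =
     {x. \<forall>y. cdf M (y + \<epsilon>) - Lim (at_left (y - \<epsilon>)) (cdf M)
            \<le> cdf M (x + \<epsilon>) - Lim (at_left (x - \<epsilon>)) (cdf M)}"

definition is_mode :: "real measure \<Rightarrow> real \<Rightarrow> bool" where
  "is_mode M m \<longleftrightarrow>
     (\<exists>\<epsilon> xs. (\<forall>n. 0 < \<epsilon> n) \<and> \<epsilon> \<longlonglongrightarrow> 0 \<and>
             (\<forall>n. xs n \<in> modal_midpoints M (\<epsilon> n)) \<and> xs \<longlonglongrightarrow> m)"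

definition unimodal :: "real measure \<Rightarrow> bool" where
  "unimodal M \<longleftrightarrow> (\<exists>!m. is_mode M m)"

definition mode :: "real measure \<Rightarrow> real" where
  "mode M = (THE m. is_mode M m)"

definition mode_class :: "real measure set" where
  "mode_class = {M. prob_space M \<and> sets M = sets borel \<and>
                    has_smooth_bounded_density M \<and> unimodal M}"

text \<open>R^k, represented as functions nat => real vanishing from index k on.\<close>
definition Rk :: "nat \<Rightarrow> (nat \<Rightarrow> real) set" where
  "Rk k = {r. \<forall>i\<ge>k. r i = 0}"

definition elicitable ::
  "'a measure set \<Rightarrow> ('a measure \<Rightarrow> 'r) \<Rightarrow> 'r set \<Rightarrow> bool" where
  "elicitable Ps \<Gamma> R \<longleftrightarrow>
     (\<exists>L :: 'r \<Rightarrow> 'a \<Rightarrow> real.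
        (\<forall>P\<in>Ps. \<forall>r\<in>R. integrable P (L r)) \<and>
        (\<forall>P\<in>Ps. {\<Gamma> P} =
            {r\<in>R. \<forall>r'\<in>R. (\<integral>y. L r y \<partial>P) \<le> (\<integral>y. L r' y \<partial>P)}))"

definition identifiable ::
  "'a measure set \<Rightarrow> ('a measure \<Rightarrow> (nat \<Rightarrow> real)) \<Rightarrow> nat \<Rightarrow> bool" where
  "identifiable Ps \<Gamma> k \<longleftrightarrow>
     (\<exists>V :: (nat \<Rightarrow> real) \<Rightarrow> 'a \<Rightarrow> (nat \<Rightarrow> real).
        (\<forall>P\<in>Ps. \<forall>r\<in>Rk k. \<forall>i<k. integrable P (\<lambda>y. V r y i)) \<and>
        (\<forall>P\<in>Ps. \<forall>r\<in>Rk k. \<Gamma> P = r \<longleftrightarrow> (\<forall>i<k. (\<integral>y. V r y i \<partial>P) = 0)))"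

definition infinite_ident_elic_complexity ::
  "'a measure set \<Rightarrow> ('a measure \<Rightarrow> 'b) \<Rightarrow> bool" where
  "infinite_ident_elic_complexity Ps \<Gamma> \<longleftrightarrow>
     \<not> (\<exists>k (\<Gamma>h :: 'a measure \<Rightarrow> (nat \<Rightarrow> real)) (f :: (nat \<Rightarrow> real) \<Rightarrow> 'b).
          (\<forall>P\<in>Ps. \<Gamma>h P \<in> Rk k) \<and> elicitable Ps \<Gamma>h (Rk k) \<and>
          identifiable Ps \<Gamma>h k \<and> (\<forall>P\<in>Ps. \<Gamma> P = f (\<Gamma>h P)))"

end

theory Submission
  imports Defs
begin

inductive_set EF :: "(real \<Rightarrow> real) set" where
  EF_const: "(\<lambda>x. c) \<in> EF"
| EF_id: "(\<lambda>x. x) \<in> EF"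
| EF_add: "f \<in> EF \<Longrightarrow> g \<in> EF \<Longrightarrow> (\<lambda>x. f x + g x) \<in> EF"
| EF_mult: "f \<in> EF \<Longrightarrow> g \<in> EF \<Longrightarrow> (\<lambda>x. f x * g x) \<in> EF"
| EF_exp: "f \<in> EF \<Longrightarrow> (\<lambda>x. exp (f x)) \<in> EF"

lemma EF_deriv_ex: "f \<in> EF \<Longrightarrow> \<exists>g\<in>EF. \<forall>x. (f has_real_derivative g x) (at x)"
proof (induction rule: EF.induct)
  case (EF_const c)
  then show ?case by (intro bexI[of _ "\<lambda>x. 0"]) (auto intro: EF.intros)
next
  case EF_id
  then show ?case by (intro bexI[of _ "\<lambda>x. 1"]) (auto intro: EF.intros)
next
  case (EF_add f g)
  then obtain f' g' where "f' \<in> EF" "g' \<in> EF" "\<forall>x. (f has_real_derivative f' x) (at x)"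
    "\<forall>x. (g has_real_derivative g' x) (at x)" by blast
  then show ?case by (intro bexI[of _ "\<lambda>x. f' x + g' x"]) (auto intro: EF.intros derivative_intros)
next
  case (EF_mult f g)
  then obtain f' g' where "f' \<in> EF" "g' \<in> EF" "\<forall>x. (f has_real_derivative f' x) (at x)"
    "\<forall>x. (g has_real_derivative g' x) (at x)" by blast
  then show ?case using EF_mult.hyps by (intro bexI[of _ "\<lambda>x. f' x * g x + f x * g' x"]) (auto intro!: EF.intros derivative_eq_intros)
next
  case (EF_exp f)
  then obtain f' where "f' \<in> EF" "\<forall>x. (f has_real_derivative f' x) (at x)" by blast
  then show ?case using EF_exp.hyps by (intro bexI[of _ "\<lambda>x. exp (f x) * f' x"]) (auto intro!: EF.intros derivative_eq_intros)
qed

lemma EF_deriv: "f \<in> EF \<Longrightarrow> deriv f \<in> EF"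
proof -
  assume "f \<in> EF"
  then obtain g where g: "g \<in> EF" "\<forall>x. (f has_real_derivative g x) (at x)" using EF_deriv_ex by blast
  have "deriv f = g" using g(2) DERIV_imp_deriv by (intro ext) blast
  then show ?thesis using g by simp
qed

lemma EF_smooth: "f \<in> EF \<Longrightarrow> smooth_fun f"
proof -
  assume f: "f \<in> EF"
  have "(deriv ^^ n) f \<in> EF" for n by (induction n) (use f EF_deriv in auto)
  then show ?thesis unfolding smooth_fun_def
    using EF_deriv_ex real_differentiable_def by blast
qed

lemma EF_sum_list: "(\<And>y. y \<in> set ys \<Longrightarrow> h y \<in> EF) \<Longrightarrow> (\<lambda>x. sum_list (map (\<lambda>y. h y x) ys)) \<in> EF"
proof (induction ys)
  case Nil
  then show ?case using EF_const[of 0] by simp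
next
  case (Cons a ys)
  then show ?case using EF_add[of "h a" "\<lambda>x. sum_list (map (\<lambda>y. h y x) ys)"] by simp
qed

definition wsum :: "(real \<times> real) list \<Rightarrow> (real \<Rightarrow> real) \<Rightarrow> real" where
  "wsum cs h = sum_list (map (\<lambda>(t,c). c * h t) cs)"
definition tv :: "(real \<times> real) list \<Rightarrow> real" where
  "tv cs = sum_list (map (\<lambda>(t,c). \<bar>c\<bar>) cs)"
definition scl :: "real \<Rightarrow> (real \<times> real) list \<Rightarrow> (real \<times> real) list" where
  "scl l cs = map (\<lambda>(t,c). (t, l*c)) cs"

lemma wsum_append[simp]: "wsum (xs @ ys) h = wsum xs h + wsum ys h"
  by (simp add: wsum_def)
lemma tv_append[simp]: "tv (xs @ ys) = tv xs + tv ys"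
  by (simp add: tv_def)
lemma wsum_scl[simp]: "wsum (scl l cs) h = l * wsum cs h"
  by (induction cs) (auto simp: wsum_def scl_def algebra_simps)
lemma tv_scl[simp]: "tv (scl l cs) = \<bar>l\<bar> * tv cs"
  by (induction cs) (auto simp: tv_def scl_def algebra_simps abs_mult)
lemma set_scl: "fst ` set (scl l cs) = fst ` set cs"
  by (force simp: scl_def)
lemma tv_nonneg: "0 \<le> tv cs"
  by (induction cs) (auto simp: tv_def)
lemma wsum_bound:
  assumes "\<And>t c. (t,c) \<in> set cs \<Longrightarrow> \<bar>h t\<bar> \<le> B"
  shows "\<bar>wsum cs h\<bar> \<le> B * tv cs"
  using assms
proof (induction cs)
  case Nil
  then show ?case by (simp add: wsum_def tv_def)
next
  case (Cons a cs)
  obtain t c where a: "a = (t,c)" by force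
  have h1: "\<bar>c * h t\<bar> \<le> B * \<bar>c\<bar>"
    using Cons.prems[of t c] a by (simp add: abs_mult mult.commute mult_left_mono)
      (metis abs_ge_zero mult.commute mult_right_mono)
  have h2: "\<bar>wsum cs h\<bar> \<le> B * tv cs" using Cons by auto
  have "wsum (a # cs) h = c * h t + wsum cs h" by (simp add: wsum_def a)
  moreover have "tv (a # cs) = \<bar>c\<bar> + tv cs" by (simp add: tv_def a)
  ultimately show ?case using h1 h2 by (simp add: algebra_simps)
qed

lemma LA_gen:
  fixes a :: "real \<Rightarrow> nat \<Rightarrow> real"
  assumes C: "0 \<le> C" and bnd: "\<And>t i. 0 < t \<Longrightarrow> t \<le> 1 \<Longrightarrow> i < k \<Longrightarrow> \<bar>a t i\<bar> \<le> C * t"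
  shows "0 < s \<Longrightarrow> s \<le> 1 \<Longrightarrow> \<exists>cs. (\<forall>p\<in>set cs. 0 < fst p \<and> fst p \<le> s) \<and> wsum cs (\<lambda>_. 1) = 1
     \<and> tv cs \<le> 3^k \<and> (\<forall>i<k. wsum cs (\<lambda>t. a t i) = 0)"
  using bnd
proof (induction k arbitrary: s)
  case 0
  then show ?case by (intro exI[of _ "[(s,1)]"]) (auto simp: wsum_def tv_def)
next
  case (Suc k)
  have bk: "\<And>t i. 0 < t \<Longrightarrow> t \<le> 1 \<Longrightarrow> i < k \<Longrightarrow> \<bar>a t i\<bar> \<le> C * t" using Suc.prems by auto
  obtain cs1 where cs1: "\<forall>p\<in>set cs1. 0 < fst p \<and> fst p \<le> s" "wsum cs1 (\<lambda>_. 1) = 1"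
     "tv cs1 \<le> 3^k" "\<forall>i<k. wsum cs1 (\<lambda>t. a t i) = 0"
    using Suc.IH[OF Suc.prems(1,2) bk] by blast
  define b1 where "b1 = wsum cs1 (\<lambda>t. a t k)"
  show ?case
  proof (cases "b1 = 0")
    case True
    then show ?thesis using cs1 b1_def
      by (intro exI[of _ cs1]) (auto simp: less_Suc_eq intro: order_trans[of _ "3^k"])
  next
    case False
    define s2 where "s2 = min s (\<bar>b1\<bar> / (2 * (C + 1) * 3^k))"
    have s2: "0 < s2" "s2 \<le> s" "s2 \<le> 1" using False Suc.prems C by (auto simp: s2_def)
    obtain cs2 where cs2: "\<forall>p\<in>set cs2. 0 < fst p \<and> fst p \<le> s2" "wsum cs2 (\<lambda>_. 1) = 1"
       "tv cs2 \<le> 3^k" "\<forall>i<k. wsum cs2 (\<lambda>t. a t i) = 0"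
      using Suc.IH[OF s2(1,3) bk] by blast
    define b2 where "b2 = wsum cs2 (\<lambda>t. a t k)"
    have "\<bar>b2\<bar> \<le> (C * s2) * tv cs2"
      unfolding b2_def
    proof (rule wsum_bound)
      fix t c assume "(t,c) \<in> set cs2"
      then have "0 < t" "t \<le> s2" using cs2(1) by force+
      then have "\<bar>a t k\<bar> \<le> C * t" using Suc.prems(3)[of t k] s2 by auto
      also have "\<dots> \<le> C * s2" using \<open>t \<le> s2\<close> C by (simp add: mult_left_mono)
      finally show "\<bar>a t k\<bar> \<le> C * s2" .
    qed
    also have "\<dots> \<le> (C * s2) * 3^k" using cs2(3) C s2 by (simp add: mult_left_mono)
    also have "\<dots> \<le> \<bar>b1\<bar> / 2"
    proof -
      have "s2 \<le> \<bar>b1\<bar> / (2 * (C + 1) * 3^k)" by (simp add: s2_def)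
      then have "s2 * (2 * (C + 1) * 3^k) \<le> \<bar>b1\<bar>" using C by (simp add: pos_le_divide_eq)
      moreover have "C * s2 * 3^k \<le> (C+1) * s2 * 3^k" using s2 by (simp add: mult_right_mono)
      ultimately show ?thesis by (simp add: algebra_simps)
    qed
    finally have b2: "\<bar>b2\<bar> \<le> \<bar>b1\<bar> / 2" .
    define l where "l = b2 / (b2 - b1)"
    have ne: "b2 - b1 \<noteq> 0" using b2 False by auto
    have dd: "\<bar>b2 - b1\<bar> \<ge> \<bar>b1\<bar> / 2" using b2 by linarith
    have l1: "\<bar>l\<bar> \<le> 1" unfolding l_def using b2 dd ne False
      by (auto simp: abs_divide divide_le_eq_1)
    have "1 - l = - b1 / (b2 - b1)" unfolding l_def using ne by (simp add: field_simps)
    then have l2: "\<bar>1 - l\<bar> \<le> 2" using dd False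
      by (auto simp: abs_divide divide_le_eq)
    define cs where "cs = scl l cs1 @ scl (1 - l) cs2"
    have "\<forall>p\<in>set cs. 0 < fst p \<and> fst p \<le> s"
    proof
      fix p assume "p \<in> set cs"
      then have "fst p \<in> fst ` set cs1 \<or> fst p \<in> fst ` set cs2"
        unfolding cs_def using set_scl by fastforce
      then show "0 < fst p \<and> fst p \<le> s" using cs1(1) cs2(1) s2 by force
    qed
    moreover have "wsum cs (\<lambda>_. 1) = 1" using cs1 cs2 by (simp add: cs_def)
    moreover have "tv cs \<le> 3^Suc k"
    proof -
      have "tv cs = \<bar>l\<bar> * tv cs1 + \<bar>1-l\<bar> * tv cs2" by (simp add: cs_def)
      also have "\<dots> \<le> 1 * 3^k + 2 * 3^k"
        using l1 l2 cs1(3) cs2(3) tv_nonneg[of cs1] tv_nonneg[of cs2]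
        by (intro add_mono mult_mono) auto
      finally show ?thesis by simp
    qed
    moreover have "\<forall>i<Suc k. wsum cs (\<lambda>t. a t i) = 0"
    proof (intro allI impI)
      fix i assume "i < Suc k"
      then consider "i < k" | "i = k" by linarith
      then show "wsum cs (\<lambda>t. a t i) = 0"
      proof cases
        case 1 then show ?thesis using cs1 cs2 by (simp add: cs_def)
      next
        case 2
        have "wsum cs (\<lambda>t. a t i) = l * b1 + (1 - l) * b2" by (simp add: cs_def 2 b1_def b2_def)
        also have "\<dots> = 0" unfolding l_def using ne by (simp add: field_simps)
        finally show ?thesis .
      qed
    qed
    ultimately show ?thesis by blast
  qed
qed

lemma cdf_density_diff:
  fixes d :: "real \<Rightarrow> real"
  assumes cont: "continuous_on UNIV d" and nn: "\<And>x. 0 \<le> d x"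
    and ps: "prob_space (density lborel (\<lambda>x. ennreal (d x)))"
    and ab: "a < b"
  shows "cdf (density lborel (\<lambda>x. ennreal (d x))) b - cdf (density lborel (\<lambda>x. ennreal (d x))) a
         = integral {a..b} d"
proof -
  let ?M = "density lborel (\<lambda>x. ennreal (d x))"
  interpret finite_borel_measure ?M
    using ps by (simp add: finite_borel_measure_def finite_borel_measure_axioms_def prob_space.finite_measure)
  have dm[measurable]: "d \<in> borel_measurable borel" using cont by (simp add: borel_measurable_continuous_onI)
  have int: "(d has_integral integral {a..b} d) {a..b}"
    using cont by (intro integrable_integral integrable_continuous_real) (auto intro: continuous_on_subset)
  have int2: "(d has_integral integral {a..b} d) {a<..b}"
    using int by (subst (asm) has_integral_spike_set_eq[of "{a..b}" "{a<..b}"])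
       (auto intro: negligible_subset[of "{a}"])
  have "((\<lambda>x. d x * indicator {a<..b} x) has_integral integral {a..b} d) UNIV"
  proof -
    have "(\<lambda>x. d x * indicator {a<..b} x) = (\<lambda>x. if x \<in> {a<..b} then d x else 0)"
      by (auto simp: indicator_def)
    then show ?thesis using int2 has_integral_restrict_UNIV[of "{a<..b}" d] by simp
  qed
  then have "(\<integral>\<^sup>+x. ennreal (d x * indicator {a<..b} x) \<partial>lborel) = integral {a..b} d"
    by (intro nn_integral_has_integral_lborel) (auto simp: nn)
  then have "emeasure ?M {a<..b} = integral {a..b} d"
    by (subst emeasure_density) (auto simp: ennreal_mult' ennreal_indicator nn)
  then have "measure ?M {a<..b} = integral {a..b} d"
  proof -
    have "0 \<le> integral {a..b} d" using int nn by (intro integral_nonneg) (auto simp: has_integral_integrable)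
    then show ?thesis by (simp add: measure_def \<open>emeasure ?M {a<..b} = integral {a..b} d\<close>)
  qed
  then show ?thesis using cdf_diff_eq[OF ab] by simp
qed

lemma cdf_density_deriv:
  fixes d :: "real \<Rightarrow> real"
  assumes cont: "continuous_on UNIV d" and nn: "\<And>x. 0 \<le> d x"
    and ps: "prob_space (density lborel (\<lambda>x. ennreal (d x)))"
  shows "(cdf (density lborel (\<lambda>x. ennreal (d x))) has_real_derivative d x0) (at x0)"
proof -
  let ?F = "cdf (density lborel (\<lambda>x. ennreal (d x)))"
  define a where "a = x0 - 1"
  define b where "b = x0 + 1"
  have eq: "?F a + integral {a..u} d = ?F u" if "u \<in> {a<..<b}" for u
    using cdf_density_diff[OF cont nn ps, of a u] that by simp
  have "((\<lambda>u. integral {a..u} d) has_real_derivative d x0) (at x0 within {a..b})"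
    using cont by (intro integral_has_real_derivative) (auto simp: a_def b_def intro: continuous_on_subset)
  then have "((\<lambda>u. integral {a..u} d) has_real_derivative d x0) (at x0)"
    by (subst (asm) at_within_interior) (auto simp: a_def b_def)
  then have "((\<lambda>u. ?F a + integral {a..u} d) has_real_derivative d x0) (at x0)"
    by (auto intro!: derivative_eq_intros)
  then show ?thesis
    by (rule has_field_derivative_transform_within_open[of _ _ _ "{a<..<b}"])
      (use eq in \<open>auto simp: a_def b_def\<close>)
qed

lemma mode_density:
  fixes d :: "real \<Rightarrow> real" and c :: real
  assumes cont: "continuous_on UNIV d" and nn: "\<And>x. 0 \<le> d x"
    and ps: "prob_space (density lborel (\<lambda>x. ennreal (d x)))"
    and inc: "\<And>x y. x < y \<Longrightarrow> y \<le> c \<Longrightarrow> d x < d y"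
    and dec: "\<And>x y. c \<le> x \<Longrightarrow> x < y \<Longrightarrow> d y < d x"
  shows "is_mode (density lborel (\<lambda>x. ennreal (d x))) m \<longleftrightarrow> m = c"
proof -
  let ?M = "density lborel (\<lambda>x. ennreal (d x))"
  let ?F = "cdf ?M"
  have D: "\<And>x. (?F has_real_derivative d x) (at x)" using cdf_density_deriv[OF cont nn ps] .
  have Fc: "isCont ?F x" for x using D DERIV_isCont by blast
  have Lim: "Lim (at_left z) ?F = ?F z" for z
    by (rule tendsto_Lim) (auto intro: tendsto_within_subset[OF Fc[unfolded isCont_def]])
  define g where "g e y = ?F (y + e) - ?F (y - e)" for e y
  have MM: "modal_midpoints ?M e = {x. \<forall>y. g e y \<le> g e x}" for e
    unfolding modal_midpoints_def g_def Lim by simp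
  have gD: "(g e has_real_derivative (d (y + e) - d (y - e))) (at y)" for e y
    unfolding g_def by (auto intro!: derivative_eq_intros D[THEN DERIV_chain2] )
  have ginc: "g e y < g e y'" if "0 < e" "y < y'" "y' \<le> c - e" for e y y'
    using that
    by (intro DERIV_pos_imp_increasing[OF \<open>y < y'\<close>]) (auto intro!: exI[of _ "d (_ + e) - d (_ - e)"] gD inc)
  have gdec: "g e y' < g e y" if "0 < e" "y < y'" "c + e \<le> y" for e y y'
    using that
    by (intro DERIV_neg_imp_decreasing[OF \<open>y < y'\<close>]) (auto intro!: exI[of _ "d (_ + e) - d (_ - e)"] gD dec)
  have gcont: "continuous_on S (g e)" for e S
    using gD by (meson DERIV_isCont continuous_at_imp_continuous_on)
  have inside: "x \<in> {c - e .. c + e}" if "0 < e" "x \<in> modal_midpoints ?M e" for e x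
  proof (rule ccontr)
    assume "x \<notin> {c - e .. c + e}"
    then consider "x < c - e" | "c + e < x" by auto
    then show False
    proof cases
      case 1 then have "g e x < g e (c - e)" using ginc[OF \<open>0<e\<close>] by auto
      then show False using that MM by (auto simp: not_le[symmetric])
    next
      case 2 then have "g e x < g e (c + e)" using gdec[OF \<open>0<e\<close>, of "c+e" x] by auto
      then show False using that MM by (auto simp: not_le[symmetric])
    qed
  qed
  have nonempty: "\<exists>x. x \<in> modal_midpoints ?M e" if e0: "0 < e" for e
  proof -
    obtain x where x: "x \<in> {c - e .. c + e}" "\<forall>y\<in>{c - e .. c + e}. g e y \<le> g e x"
      using continuous_attains_sup[of "{c - e .. c + e}" "g e"] gcont e0 by auto
    have "g e y \<le> g e x" for y
    proof -
      consider "y < c - e" | "y \<in> {c - e .. c + e}" | "c + e < y" by force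
      then show ?thesis
      proof cases
        case 1
        have "g e (c - e) \<le> g e x" using x that by auto
        then show ?thesis using ginc[OF that 1 order_refl] by linarith
      next
        case 2 then show ?thesis using x by auto
      next
        case 3
        have "g e (c + e) \<le> g e x" using x that by auto
        then show ?thesis using gdec[OF that 3 order_refl] by linarith
      qed
    qed
    then show ?thesis using MM by auto
  qed
  have conv: "xs \<longlonglongrightarrow> c" if "\<forall>n. 0 < \<epsilon> n" "\<epsilon> \<longlonglongrightarrow> 0" "\<forall>n. xs n \<in> modal_midpoints ?M (\<epsilon> n)"
    for \<epsilon> xs
  proof -
    have "norm (xs n - c) \<le> \<epsilon> n" for n using inside[of "\<epsilon> n" "xs n"] that by (auto simp: abs_le_iff)
    then have "(\<lambda>n. xs n - c) \<longlonglongrightarrow> 0"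
      by (intro Lim_null_comparison[OF _ that(2)]) auto
    then show ?thesis by (simp add: LIM_zero_iff)
  qed
  show ?thesis
  proof
    assume "is_mode ?M m"
    then obtain \<epsilon> xs where "\<forall>n. 0 < \<epsilon> n" "\<epsilon> \<longlonglongrightarrow> 0" "\<forall>n. xs n \<in> modal_midpoints ?M (\<epsilon> n)" "xs \<longlonglongrightarrow> m"
      unfolding is_mode_def by blast
    then show "m = c" using conv LIMSEQ_unique by blast
  next
    assume "m = c"
    define \<epsilon> where "\<epsilon> n = inverse (real (Suc n))" for n
    define xs where "xs n = (SOME x. x \<in> modal_midpoints ?M (\<epsilon> n))" for n
    have "\<epsilon> = (\<lambda>n. inverse (real (Suc n)))" by (simp add: \<epsilon>_def fun_eq_iff)
    then have e: "\<forall>n. 0 < \<epsilon> n" "\<epsilon> \<longlonglongrightarrow> 0" using LIMSEQ_inverse_real_of_nat by auto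
    have x: "\<forall>n. xs n \<in> modal_midpoints ?M (\<epsilon> n)"
      using nonempty e(1) unfolding xs_def by (metis someI_ex)
    show "is_mode ?M m" unfolding is_mode_def \<open>m = c\<close>
      using e x conv[OF e x] by blast
  qed
qed

lemma mode_density2:
  fixes d :: "real \<Rightarrow> real" and c :: real
  assumes cont: "continuous_on UNIV d" and nn: "\<And>x. 0 \<le> d x"
    and ps: "prob_space (density lborel (\<lambda>x. ennreal (d x)))"
    and inc: "\<And>x y. x < y \<Longrightarrow> y \<le> c \<Longrightarrow> d x < d y"
    and dec: "\<And>x y. c \<le> x \<Longrightarrow> x < y \<Longrightarrow> d y < d x"
  shows "unimodal (density lborel (\<lambda>x. ennreal (d x)))" "mode (density lborel (\<lambda>x. ennreal (d x))) = c"
  using mode_density[OF assms] unfolding unimodal_def mode_def by auto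

definition gt :: "real \<Rightarrow> real \<Rightarrow> real" where
  "gt t x = x * exp (-(x\<^sup>2 / t\<^sup>2))"
definition g1 :: "real \<Rightarrow> real \<Rightarrow> real" where
  "g1 t x = (1 - 2 * x\<^sup>2 / t\<^sup>2) * exp (-(x\<^sup>2 / t\<^sup>2))"
definition g2 :: "real \<Rightarrow> real \<Rightarrow> real" where
  "g2 t x = (4 * x^3 / t^4 - 6 * x / t\<^sup>2) * exp (-(x\<^sup>2 / t\<^sup>2))"

lemma gt_deriv: "t \<noteq> 0 \<Longrightarrow> (gt t has_real_derivative g1 t x) (at x)"
  unfolding gt_def g1_def
  by (auto intro!: derivative_eq_intros simp: field_simps power2_eq_square)

lemma g1_deriv: "t \<noteq> 0 \<Longrightarrow> (g1 t has_real_derivative g2 t x) (at x)"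
  unfolding g2_def g1_def
  by (auto intro!: derivative_eq_intros simp: field_simps power2_eq_square power3_eq_cube power4_eq_xxxx)

lemma exp_sq_bound: "0 \<le> z \<Longrightarrow> 1 + z + z\<^sup>2/4 \<le> exp (z::real)"
proof -
  assume z: "0 \<le> z"
  have a: "1 + z/2 \<le> exp (z/2)" by (rule exp_ge_add_one_self)
  have b: "exp z = exp (z/2) * exp (z/2)" by (simp flip: exp_add)
  have "(1 + z/2) * (1 + z/2) \<le> exp (z/2) * exp (z/2)"
    using a z by (intro mult_mono) auto
  then show ?thesis using b by (simp add: power2_eq_square algebra_simps)
qed

lemma ybounds:
  fixes y :: real
  shows "\<bar>y\<bar> * exp (-(y\<^sup>2)) \<le> 1" "\<bar>y - 2*y^3\<bar> * exp (-(y\<^sup>2)) \<le> 4"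
    "\<bar>4*y^3 - 6*y\<bar> * exp (-(y\<^sup>2)) \<le> 8"
proof -
  define a where "a = \<bar>y\<bar>"
  have a0: "0 \<le> a" by (simp add: a_def)
  have y2: "y\<^sup>2 = a\<^sup>2" by (simp add: a_def)
  have E: "1 + a\<^sup>2 + a^4/4 \<le> exp (y\<^sup>2)" using exp_sq_bound[of "y\<^sup>2"] y2
    by (simp add: power2_eq_square power4_eq_xxxx)
  have ex: "exp (-(y\<^sup>2)) = inverse (exp (y\<^sup>2))" by (simp add: exp_minus)
  have P: "\<bar>p\<bar> * exp (-(y\<^sup>2)) \<le> K" if "\<bar>p\<bar> \<le> K * exp (y\<^sup>2)" for p K
    using that by (simp add: ex field_simps)
  have c1: "\<bar>y - 2*y^3\<bar> \<le> a + 2*a^3"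
  proof -
    have "\<bar>y - 2*y^3\<bar> \<le> \<bar>y\<bar> + \<bar>2*y^3\<bar>" by (rule abs_triangle_ineq4)
    moreover have "\<bar>2*y^3\<bar> = 2*a^3" by (simp add: a_def abs_mult power_abs)
    ultimately show ?thesis by (simp add: a_def)
  qed
  have c2: "\<bar>4*y^3 - 6*y\<bar> \<le> 4*a^3 + 6*a"
  proof -
    have "\<bar>4*y^3 - 6*y\<bar> \<le> \<bar>4*y^3\<bar> + \<bar>6*y\<bar>" by (rule abs_triangle_ineq4)
    moreover have "\<bar>4*y^3\<bar> = 4*a^3" by (simp add: a_def abs_mult power_abs)
    moreover have "\<bar>6*y\<bar> = 6*a" by (simp add: a_def abs_mult)
    ultimately show ?thesis by simp
  qed
  have e1: "(a\<^sup>2 - a)\<^sup>2 = a^4 - 2*a^3 + a\<^sup>2"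
    by (simp add: power2_eq_square power3_eq_cube power4_eq_xxxx algebra_simps)
  have e2: "(a - 1/2)\<^sup>2 = a\<^sup>2 - a + 1/4"
    by (simp add: power2_eq_square algebra_simps)
  have f1: "0 \<le> a^4 - 2*a^3 + a\<^sup>2" using e1 by (metis zero_le_power2)
  have f2: "0 \<le> a\<^sup>2 - a + 1/4" using e2 by (metis zero_le_power2)
  have f3: "0 \<le> a^4" by simp
  have "a \<le> 1 + a\<^sup>2 + a^4/4" using f2 f3 by linarith
  then have "\<bar>y\<bar> \<le> 1 * exp (y\<^sup>2)" using E by (simp add: a_def)
  then show "\<bar>y\<bar> * exp (-(y\<^sup>2)) \<le> 1" by (rule P)
  have "a + 2*a^3 \<le> 4 + 4*a\<^sup>2 + a^4" using f1 f2 a0 by linarith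
  then have "a + 2*a^3 \<le> 4 * (1 + a\<^sup>2 + a^4/4)" by (simp add: algebra_simps)
  then show "\<bar>y - 2*y^3\<bar> * exp (-(y\<^sup>2)) \<le> 4"
  proof (intro P)
    have "4 * (1 + a\<^sup>2 + a^4/4) \<le> 4 * exp (y\<^sup>2)" using E by simp
    then show "\<bar>y - 2*y^3\<bar> \<le> 4 * exp (y\<^sup>2)" using c1 \<open>a + 2*a^3 \<le> 4 * _\<close> by linarith
  qed
  have "4*a^3 + 6*a \<le> 8 + 8*a\<^sup>2 + 2*a^4" using f1 f2 a0 by linarith
  then have "4*a^3 + 6*a \<le> 8 * (1 + a\<^sup>2 + a^4/4)" by (simp add: algebra_simps)
  then show "\<bar>4*y^3 - 6*y\<bar> * exp (-(y\<^sup>2)) \<le> 8"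
  proof (intro P)
    have "8 * (1 + a\<^sup>2 + a^4/4) \<le> 8 * exp (y\<^sup>2)" using E by simp
    then show "\<bar>4*y^3 - 6*y\<bar> \<le> 8 * exp (y\<^sup>2)" using c2 \<open>4*a^3 + 6*a \<le> 8 * _\<close> by linarith
  qed
qed


lemma t_bounds:
  assumes t: "0 < t"
  shows "\<bar>gt t x\<bar> \<le> t" "\<bar>x * g1 t x\<bar> \<le> 4 * t" "\<bar>g2 t x\<bar> \<le> 8 / t"
proof -
  define y where "y = x / t"
  have x: "x = t * y" using t by (simp add: y_def)
  have q: "x\<^sup>2 / t\<^sup>2 = y\<^sup>2" using t by (simp add: x power_mult_distrib)
  have "gt t x = t * (y * exp (-(y\<^sup>2)))" unfolding gt_def q by (simp add: x)
  then show "\<bar>gt t x\<bar> \<le> t" using ybounds(1)[of y] t by (simp add: abs_mult mult_left_le)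
  have "x * g1 t x = t * ((y - 2*y^3) * exp (-(y\<^sup>2)))" unfolding g1_def q
    by (simp add: x algebra_simps power2_eq_square power3_eq_cube)
  then show "\<bar>x * g1 t x\<bar> \<le> 4 * t" using ybounds(2)[of y] t
    by (simp add: abs_mult mult.commute mult_left_mono)
  have "g2 t x = (1/t) * ((4*y^3 - 6*y) * exp (-(y\<^sup>2)))" unfolding g2_def q using t
    by (simp add: x field_simps power2_eq_square power3_eq_cube power4_eq_xxxx)
  then show "\<bar>g2 t x\<bar> \<le> 8 / t" using ybounds(3)[of y] t
    by (simp add: abs_mult divide_right_mono)
qed

definition tw :: "(real \<times> real) list \<Rightarrow> real" where
  "tw cs = sum_list (map (\<lambda>(t,c). \<bar>c\<bar> / t) cs)"

definition valid :: "(real \<times> real) list \<Rightarrow> bool" where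
  "valid cs \<longleftrightarrow> (\<forall>p\<in>set cs. 0 < fst p \<and> fst p \<le> 1)"

lemma valid_Cons[simp]: "valid ((t,c) # cs) \<longleftrightarrow> 0 < t \<and> t \<le> 1 \<and> valid cs"
  by (auto simp: valid_def)

lemma wsum_Nil[simp]: "wsum [] h = 0" by (simp add: wsum_def)
lemma wsum_Cons[simp]: "wsum ((t,c) # cs) h = c * h t + wsum cs h" by (simp add: wsum_def)
lemma tw_Nil[simp]: "tw [] = 0" by (simp add: tw_def)
lemma tw_Cons[simp]: "tw ((t,c) # cs) = \<bar>c\<bar> / t + tw cs" by (simp add: tw_def)

lemma tw_nonneg: "valid cs \<Longrightarrow> 0 \<le> tw cs"
  by (induction cs) auto

lemma wsum_bound2:
  assumes "valid cs" "\<And>t. 0 < t \<Longrightarrow> t \<le> 1 \<Longrightarrow> \<bar>h t\<bar> \<le> K / t" "0 \<le> K"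
  shows "\<bar>wsum cs h\<bar> \<le> K * tw cs"
  using assms(1)
proof (induction cs)
  case Nil then show ?case by simp
next
  case (Cons a cs)
  obtain t c where a: "a = (t,c)" by force
  have t: "0 < t" "t \<le> 1" "valid cs" using Cons.prems a by auto
  have "\<bar>c * h t\<bar> \<le> \<bar>c\<bar> * (K / t)" using assms(2)[OF t(1,2)] by (simp add: abs_mult mult_left_mono)
    (metis abs_ge_zero mult_left_mono times_divide_eq_right)
  then have "\<bar>c * h t\<bar> \<le> K * (\<bar>c\<bar> / t)" by (simp add: field_simps)
  moreover have "\<bar>wsum cs h\<bar> \<le> K * tw cs" using Cons.IH t by auto
  ultimately show ?case using a by (simp add: algebra_simps)
qed

lemma wsum_mult: "wsum cs (\<lambda>t. k * h t) = k * wsum cs h"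
  by (induction cs) (auto simp: wsum_def algebra_simps)

lemma wsum_deriv:
  assumes "\<And>t x. t \<in> fst ` set cs \<Longrightarrow> (f t has_real_derivative f' t x) (at x)"
  shows "((\<lambda>x. wsum cs (\<lambda>t. f t x)) has_real_derivative wsum cs (\<lambda>t. f' t x)) (at x within S)"
  using assms
proof (induction cs)
  case Nil then show ?case by simp
next
  case (Cons a cs)
  obtain t c where a: "a = (t,c)" by force
  have "(f t has_real_derivative f' t x) (at x within S)" using Cons.prems[of t x] a
    by (auto intro: has_field_derivative_at_within)
  moreover have "((\<lambda>x. wsum cs (\<lambda>t. f t x)) has_real_derivative wsum cs (\<lambda>t. f' t x)) (at x within S)"
    using Cons by auto
  ultimately show ?case using a by (auto intro!: derivative_eq_intros)
qed

definition Gs where "Gs cs x = wsum cs (\<lambda>t. gt t x)"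
definition G1 where "G1 cs x = wsum cs (\<lambda>t. g1 t x)"
definition G2 where "G2 cs x = wsum cs (\<lambda>t. g2 t x)"
definition u where "u cs x = -2 * x * (1 + Gs cs x) + G1 cs x"
definition u' where "u' cs x = -2 * (1 + Gs cs x) - 2 * x * G1 cs x + G2 cs x"

lemma valid_fst: "valid cs \<Longrightarrow> t \<in> fst ` set cs \<Longrightarrow> 0 < t \<and> t \<le> 1"
  by (auto simp: valid_def)

lemma Gs_deriv: "valid cs \<Longrightarrow> (Gs cs has_real_derivative G1 cs x) (at x within S)"
  unfolding Gs_def[abs_def] G1_def
  by (rule wsum_deriv) (auto intro!: gt_deriv dest: valid_fst)

lemma G1_deriv: "valid cs \<Longrightarrow> (G1 cs has_real_derivative G2 cs x) (at x within S)"
  unfolding G1_def[abs_def] G2_def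
  by (rule wsum_deriv) (auto intro!: g1_deriv dest: valid_fst)

lemma u_deriv: "valid cs \<Longrightarrow> (u cs has_real_derivative u' cs x) (at x within S)"
  unfolding u_def[abs_def] u'_def
  by (auto intro!: derivative_eq_intros Gs_deriv G1_deriv simp: algebra_simps)

lemma G_bounds:
  assumes "valid cs"
  shows "\<bar>Gs cs x\<bar> \<le> tw cs" "\<bar>x * G1 cs x\<bar> \<le> 4 * tw cs" "\<bar>G2 cs x\<bar> \<le> 8 * tw cs"
proof -
  show "\<bar>Gs cs x\<bar> \<le> tw cs"
    using wsum_bound2[OF assms, of "\<lambda>t. gt t x" 1] t_bounds(1)
    by (simp add: Gs_def) (smt (verit) divide_le_eq_1 le_divide_eq_1)
  have "\<bar>wsum cs (\<lambda>t. x * g1 t x)\<bar> \<le> 4 * tw cs"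
  proof (rule wsum_bound2[OF assms])
    fix t :: real assume t: "0 < t" "t \<le> 1"
    have "4 * t \<le> 4 / t" using t by (simp add: field_simps) (smt (verit) mult_le_one)
    then show "\<bar>x * g1 t x\<bar> \<le> 4 / t" using t_bounds(2)[OF t(1), of x] by linarith
  qed simp
  then show "\<bar>x * G1 cs x\<bar> \<le> 4 * tw cs" by (simp add: G1_def wsum_mult)
  show "\<bar>G2 cs x\<bar> \<le> 8 * tw cs" unfolding G2_def
    by (rule wsum_bound2[OF assms]) (auto intro: t_bounds(3))
qed

lemma u'_bound: "valid cs \<Longrightarrow> tw cs \<le> 1/40 \<Longrightarrow> u' cs x \<le> -1"
  using G_bounds[of cs x] unfolding u'_def by (simp add: abs_le_iff)

definition nd :: "real \<Rightarrow> real" where "nd x = exp (-(x\<^sup>2)) / sqrt pi"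
definition dens where "dens cs x = nd x * (1 + Gs cs x)"

lemma nd_normal: "nd = normal_density 0 (1 / sqrt 2)"
  by (auto simp: fun_eq_iff nd_def normal_density_def power_divide)

lemma nd_pos: "0 < nd x" by (simp add: nd_def)
lemma nd_le: "nd x \<le> 1 / sqrt pi" by (simp add: nd_def divide_right_mono)

lemma nd_deriv: "(nd has_real_derivative (-2 * x * nd x)) (at x)"
proof -
  have sp: "sqrt pi * sqrt pi = pi" by simp
  show ?thesis unfolding nd_def
    by (rule derivative_eq_intros refl | simp)+ (simp add: field_simps power2_eq_square sp)
qed

lemma dens_deriv: "valid cs \<Longrightarrow> (dens cs has_real_derivative nd x * u cs x) (at x)"
  unfolding dens_def[abs_def] u_def
  by (auto intro!: derivative_eq_intros nd_deriv Gs_deriv simp: algebra_simps)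

lemma u_cont: "valid cs \<Longrightarrow> isCont (u cs) x"
  using u_deriv[of cs x UNIV] DERIV_isCont by blast

lemma u_dec:
  assumes v: "valid cs" "tw cs \<le> 1/40" and xy: "x < y"
  shows "u cs y \<le> u cs x - (y - x)"
proof -
  obtain z where "x < z" "z < y" "u cs y - u cs x = (y - x) * u' cs z"
    using MVT2[OF xy, of "u cs" "u' cs"] u_deriv[OF v(1)] by blast
  moreover have "u' cs z \<le> -1" using u'_bound[OF v] .
  ultimately have "u cs y - u cs x \<le> (y - x) * (-1)" using xy by (metis mult_left_mono less_eq_real_def diff_gt_0_iff_gt)
  then show ?thesis by simp
qed

lemma u_zero:
  assumes v: "valid cs" "tw cs \<le> 1/40"
  obtains c where "u cs c = 0" "\<And>x. x < c \<Longrightarrow> 0 < u cs x" "\<And>x. c < x \<Longrightarrow> u cs x < 0"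
proof -
  define R where "R = \<bar>u cs 0\<bar> + 1"
  have R: "0 < R" by (simp add: R_def)
  have "u cs R \<le> u cs 0 - R" using u_dec[OF v, of 0 R] R by simp
  then have a: "u cs R \<le> 0" by (simp add: R_def)
  have "u cs 0 \<le> u cs (-R) - R" using u_dec[OF v, of "-R" 0] R by simp
  then have b: "0 \<le> u cs (-R)" by (simp add: R_def)
  obtain c where "u cs c = 0" using IVT2[of "u cs" R 0 "-R"] a b R u_cont[OF v(1)] by force
  moreover have "0 < u cs x" if "x < c" for x using u_dec[OF v that] \<open>u cs c = 0\<close> that by simp
  moreover have "u cs x < 0" if "c < x" for x using u_dec[OF v that] \<open>u cs c = 0\<close> that by simp
  ultimately show ?thesis using that by blast
qed

lemma u0: "u cs 0 = wsum cs (\<lambda>_. 1)"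
  by (simp add: u_def G1_def g1_def)

lemma dens_cont: "valid cs \<Longrightarrow> continuous_on UNIV (dens cs)"
  using dens_deriv DERIV_isCont continuous_at_imp_continuous_on by blast

lemma dens_pos: "valid cs \<Longrightarrow> tw cs \<le> 1/40 \<Longrightarrow> 0 < dens cs x"
  using G_bounds(1)[of cs x] nd_pos[of x] unfolding dens_def by (simp add: abs_le_iff)

lemma dens_bounded: "valid cs \<Longrightarrow> tw cs \<le> 1/40 \<Longrightarrow> \<bar>dens cs x\<bar> \<le> 2 / sqrt pi"
proof -
  assume v: "valid cs" "tw cs \<le> 1/40"
  have "\<bar>1 + Gs cs x\<bar> \<le> 2" using G_bounds(1)[OF v(1), of x] v(2) by (simp add: abs_le_iff)
  then have "\<bar>dens cs x\<bar> \<le> (1 / sqrt pi) * 2"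
    unfolding dens_def abs_mult using nd_le[of x] nd_pos[of x] by (intro mult_mono) auto
  then show ?thesis by simp
qed

lemma dens_mono:
  assumes v: "valid cs" "tw cs \<le> 1/40"
  obtains c where "\<And>x y. x < y \<Longrightarrow> y \<le> c \<Longrightarrow> dens cs x < dens cs y"
    "\<And>x y. c \<le> x \<Longrightarrow> x < y \<Longrightarrow> dens cs y < dens cs x"
    "wsum cs (\<lambda>_. 1) > 0 \<Longrightarrow> c > 0" "wsum cs (\<lambda>_. 1) = 0 \<Longrightarrow> c = 0"
proof -
  obtain c where c: "u cs c = 0" "\<And>x. x < c \<Longrightarrow> 0 < u cs x" "\<And>x. c < x \<Longrightarrow> u cs x < 0"
    using u_zero[OF v] by blast
  have cont: "continuous_on S (dens cs)" for S using dens_cont[OF v(1)] continuous_on_subset by blast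
  have 1: "dens cs x < dens cs y" if "x < y" "y \<le> c" for x y
  proof (rule DERIV_pos_imp_increasing_open[OF that(1) _ cont])
    fix z assume "x < z" "z < y"
    then show "\<exists>D. (dens cs has_real_derivative D) (at z) \<and> 0 < D"
      using dens_deriv[OF v(1), of z] c(2)[of z] nd_pos[of z] that by auto
  qed
  have 2: "dens cs y < dens cs x" if "c \<le> x" "x < y" for x y
  proof (rule DERIV_neg_imp_decreasing_open[OF that(2) _ cont])
    fix z assume "x < z" "z < y"
    then show "\<exists>D. (dens cs has_real_derivative D) (at z) \<and> D < 0"
      using dens_deriv[OF v(1), of z] c(3)[of z] nd_pos[of z] that
      by (auto intro!: exI[of _ "nd z * u cs z"] simp: mult_pos_neg)
  qed
  have 3: "c > 0" if "wsum cs (\<lambda>_. 1) > 0"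
    using c u0[of cs] that by (metis linorder_neqE_linordered_idom less_irrefl order.strict_trans)
  have 4: "c = 0" if "wsum cs (\<lambda>_. 1) = 0"
    using c u0[of cs] that by (metis linorder_neqE_linordered_idom less_irrefl)
  show ?thesis using that 1 2 3 4 by blast
qed

lemma EF_cmul: "f \<in> EF \<Longrightarrow> (\<lambda>x. k * f x) \<in> EF"
  using EF_mult[OF EF_const] by blast

lemma EF_expq: "(\<lambda>x. exp (k * x * x)) \<in> EF"
  using EF_exp[OF EF_mult[OF EF_cmul[OF EF_id] EF_id]] by simp

lemma gt_EF: "gt t \<in> EF"
proof -
  have eq: "gt t = (\<lambda>x. x * exp ((-1/t\<^sup>2) * x * x))"
    by (auto simp: fun_eq_iff gt_def power2_eq_square)
  show ?thesis unfolding eq by (rule EF_mult[OF EF_id EF_expq])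
qed

lemma Gs_EF: "Gs cs \<in> EF"
proof (induction cs)
  case Nil
  then show ?case using EF_const[of 0] by (simp add: Gs_def[abs_def])
next
  case (Cons a cs)
  obtain t c where a: "a = (t,c)" by force
  have "Gs (a # cs) = (\<lambda>x. c * gt t x + Gs cs x)" by (auto simp: fun_eq_iff Gs_def a)
  then show ?case using EF_add[OF EF_cmul[OF gt_EF] Cons.IH] by simp
qed

lemma dens_EF: "dens cs \<in> EF"
proof -
  have eq: "dens cs = (\<lambda>x. (1 / sqrt pi) * exp ((-1) * x * x) * (1 + Gs cs x))"
    by (auto simp: fun_eq_iff dens_def nd_def power2_eq_square)
  show ?thesis unfolding eq by (rule EF_mult[OF EF_cmul[OF EF_expq] EF_add[OF EF_const Gs_EF]])
qed

lemma gt_cont: "continuous_on UNIV (gt t)"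
  using EF_deriv_ex[OF gt_EF[of t]] DERIV_isCont continuous_at_imp_continuous_on by blast

lemma gt_meas[measurable]: "gt t \<in> borel_measurable borel"
  using gt_cont by (rule borel_measurable_continuous_onI)

lemma nd_meas[measurable]: "nd \<in> borel_measurable borel"
  unfolding nd_def by measurable

lemma gt_abs_le1: "0 < t \<Longrightarrow> t \<le> 1 \<Longrightarrow> \<bar>gt t x\<bar> \<le> 1"
  using t_bounds(1)[of t x] by simp

lemma int_term:
  assumes W: "integrable lborel (\<lambda>x. nd x * W x)" and t: "0 < t" "t \<le> 1"
  shows "integrable lborel (\<lambda>x. nd x * W x * gt t x)"
proof (rule Bochner_Integration.integrable_bound[OF W])
  show "(\<lambda>x. nd x * W x * gt t x) \<in> borel_measurable lborel"
    using borel_measurable_integrable[OF W] by measurable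
  show "AE x in lborel. norm (nd x * W x * gt t x) \<le> norm (nd x * W x)"
    using gt_abs_le1[OF t] by (auto simp: abs_mult intro!: mult_left_le)
qed

lemma int_lin:
  assumes W: "integrable lborel (\<lambda>x. nd x * W x)" and v: "valid cs"
  shows "integrable lborel (\<lambda>x. nd x * W x * Gs cs x) \<and>
    (\<integral>x. nd x * W x * Gs cs x \<partial>lborel) = wsum cs (\<lambda>t. \<integral>x. nd x * W x * gt t x \<partial>lborel)"
  using v
proof (induction cs)
  case Nil
  then show ?case by (simp add: Gs_def)
next
  case (Cons a cs)
  obtain t c where a: "a = (t,c)" by force
  have t: "0 < t" "t \<le> 1" "valid cs" using Cons.prems a by auto
  have eq: "(\<lambda>x. nd x * W x * Gs (a # cs) x) = (\<lambda>x. c * (nd x * W x * gt t x) + nd x * W x * Gs cs x)"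
    by (auto simp: fun_eq_iff a Gs_def algebra_simps)
  have i1: "integrable lborel (\<lambda>x. c * (nd x * W x * gt t x))" using int_term[OF W t(1,2)] by simp
  have i2: "integrable lborel (\<lambda>x. nd x * W x * Gs cs x)" using Cons.IH t by blast
  show ?case unfolding eq using i1 i2 Cons.IH t
    by (simp add: a Bochner_Integration.integral_add)
qed

lemma odd_int: "(\<integral>x. nd x * gt t x \<partial>lborel) = 0"
proof -
  have "(\<integral>x. nd x * gt t x \<partial>lborel) = \<bar>-1\<bar> *\<^sub>R (\<integral>x. nd (0 + -1 * x) * gt t (0 + -1 * x) \<partial>lborel)"
    by (rule lborel_integral_real_affine) simp
  also have "\<dots> = (\<integral>x. - (nd x * gt t x) \<partial>lborel)"
    by (simp add: nd_def gt_def)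
  also have "\<dots> = - (\<integral>x. nd x * gt t x \<partial>lborel)" by simp
  finally show ?thesis by simp
qed

lemma wsum_zero: "wsum cs (\<lambda>_. 0) = 0"
  by (induction cs) (auto simp: wsum_def)

lemma nd_int: "integrable lborel nd"
  unfolding nd_normal by simp

lemma dens_int: "valid cs \<Longrightarrow> integrable lborel (dens cs) \<and> (\<integral>x. dens cs x \<partial>lborel) = 1"
proof -
  assume v: "valid cs"
  have W: "integrable lborel (\<lambda>x. nd x * 1)" using nd_int by simp
  note L = int_lin[OF W v]
  have eq: "dens cs = (\<lambda>x. nd x + nd x * 1 * Gs cs x)" by (auto simp: fun_eq_iff dens_def algebra_simps)
  have n1: "(\<integral>x. nd x \<partial>lborel) = 1" unfolding nd_normal by simp
  have z: "(\<lambda>t. \<integral>x. nd x * 1 * gt t x \<partial>lborel) = (\<lambda>t. 0)" using odd_int by simp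
  then show ?thesis unfolding eq using L nd_int n1
    by (simp add: Bochner_Integration.integral_add wsum_zero del: mult_1_right)
qed

lemma dens_class:
  assumes v: "valid cs" "tw cs \<le> 1/40"
  obtains c where "density lborel (\<lambda>x. ennreal (dens cs x)) \<in> mode_class"
    "mode (density lborel (\<lambda>x. ennreal (dens cs x))) = c"
    "wsum cs (\<lambda>_. 1) > 0 \<Longrightarrow> c > 0" "wsum cs (\<lambda>_. 1) = 0 \<Longrightarrow> c = 0"
proof -
  let ?M = "density lborel (\<lambda>x. ennreal (dens cs x))"
  have nn: "\<And>x. 0 \<le> dens cs x" using dens_pos[OF v] less_imp_le by blast
  have cont: "continuous_on UNIV (dens cs)" using dens_cont[OF v(1)] .
  have meas[measurable]: "dens cs \<in> borel_measurable borel" using cont by (rule borel_measurable_continuous_onI)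
  have ps: "prob_space ?M"
  proof
    have "emeasure ?M (space ?M) = (\<integral>\<^sup>+x. ennreal (dens cs x) \<partial>lborel)"
      by (simp add: emeasure_density)
    also have "\<dots> = ennreal (\<integral>x. dens cs x \<partial>lborel)"
      using dens_int[OF v(1)] nn by (intro nn_integral_eq_integral) auto
    also have "\<dots> = 1" using dens_int[OF v(1)] by simp
    finally show "emeasure ?M (space ?M) = 1" .
  qed
  obtain c where c: "\<And>x y. x < y \<Longrightarrow> y \<le> c \<Longrightarrow> dens cs x < dens cs y"
    "\<And>x y. c \<le> x \<Longrightarrow> x < y \<Longrightarrow> dens cs y < dens cs x"
    "wsum cs (\<lambda>_. 1) > 0 \<Longrightarrow> c > 0" "wsum cs (\<lambda>_. 1) = 0 \<Longrightarrow> c = 0"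
    using dens_mono[OF v] by blast
  note md = mode_density2[OF cont nn ps c(1,2)]
  have "has_smooth_bounded_density ?M"
    unfolding has_smooth_bounded_density_def
  proof (intro exI conjI)
    show "smooth_fun (dens cs)" using dens_EF by (rule EF_smooth)
    show "bounded (range (dens cs))"
      unfolding bounded_iff using dens_bounded[OF v] by auto
  qed (use nn in auto)
  then have "?M \<in> mode_class" unfolding mode_class_def using ps md(1) by auto
  then show ?thesis using that md(2) c(3,4) by blast
qed

lemma tw_scl: "0 \<le> l \<Longrightarrow> tw (scl l cs) = l * tw cs"
  by (induction cs) (auto simp: tw_def scl_def abs_mult algebra_simps)

lemma valid_scl: "valid cs \<Longrightarrow> valid (scl l cs)"
  by (auto simp: valid_def scl_def)

lemma dens_Nil: "dens [] = nd"
  by (simp add: fun_eq_iff dens_def Gs_def)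

lemma integral_dens:
  assumes "integrable (density lborel (\<lambda>x. ennreal (dens cs x))) W" "valid cs" "tw cs \<le> 1/40"
  shows "integrable lborel (\<lambda>x. dens cs x * W x)"
    "(\<integral>y. W y \<partial>density lborel (\<lambda>x. ennreal (dens cs x))) = (\<integral>x. dens cs x * W x \<partial>lborel)"
proof -
  have cont: "continuous_on UNIV (dens cs)" using dens_cont[OF assms(2)] .
  have meas[measurable]: "dens cs \<in> borel_measurable borel" using cont by (rule borel_measurable_continuous_onI)
  have Wm: "W \<in> borel_measurable lborel"
    using borel_measurable_integrable[OF assms(1)] by simp
  have nnAE: "AE x in lborel. 0 \<le> dens cs x" using dens_pos[OF assms(2,3)] by (simp add: less_imp_le)
  show "integrable lborel (\<lambda>x. dens cs x * W x)"
    using assms(1) integrable_density[of W lborel "dens cs"] Wm nnAE by simp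
  show "(\<integral>y. W y \<partial>density lborel (\<lambda>x. ennreal (dens cs x))) = (\<integral>x. dens cs x * W x \<partial>lborel)"
    using integral_density[of W lborel "dens cs"] Wm nnAE by simp
qed

theorem theorem1:
  shows "infinite_ident_elic_complexity mode_class mode"
  unfolding infinite_ident_elic_complexity_def
proof
  assume "\<exists>k (\<Gamma>h :: real measure \<Rightarrow> (nat \<Rightarrow> real)) (f :: (nat \<Rightarrow> real) \<Rightarrow> real).
          (\<forall>P\<in>mode_class. \<Gamma>h P \<in> Rk k) \<and> elicitable mode_class \<Gamma>h (Rk k) \<and>
          identifiable mode_class \<Gamma>h k \<and> (\<forall>P\<in>mode_class. mode P = f (\<Gamma>h P))"
  then obtain k and \<Gamma>h :: "real measure \<Rightarrow> (nat \<Rightarrow> real)" and f :: "(nat \<Rightarrow> real) \<Rightarrow> real" where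
    inRk: "\<forall>P\<in>mode_class. \<Gamma>h P \<in> Rk k" and idf: "identifiable mode_class \<Gamma>h k"
    and fm: "\<forall>P\<in>mode_class. mode P = f (\<Gamma>h P)"
    by blast
  obtain V :: "(nat \<Rightarrow> real) \<Rightarrow> real \<Rightarrow> (nat \<Rightarrow> real)" where
    Vint: "\<forall>P\<in>mode_class. \<forall>r\<in>Rk k. \<forall>i<k. integrable P (\<lambda>y. V r y i)" and
    Viff: "\<forall>P\<in>mode_class. \<forall>r\<in>Rk k. \<Gamma>h P = r \<longleftrightarrow> (\<forall>i<k. (\<integral>y. V r y i \<partial>P) = 0)"
    using idf unfolding identifiable_def by blast
  define P0 where "P0 = density lborel (\<lambda>x. ennreal (dens [] x))"
  have v0: "valid []" "tw [] \<le> 1/40" by (auto simp: valid_def)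
  obtain c0 where P0c: "P0 \<in> mode_class" and m0: "mode P0 = c0" and c0': "wsum [] (\<lambda>_. 1) = 0 \<Longrightarrow> c0 = 0"
    using dens_class[OF v0] unfolding P0_def by blast
  have c0: "c0 = 0" using c0' by simp
  define r0 where "r0 = \<Gamma>h P0"
  have r0: "r0 \<in> Rk k" using inRk P0c by (simp add: r0_def)
  define W where "W i y = V r0 y i" for i y
  have WP0: "integrable P0 (W i)" if "i < k" for i
    using Vint P0c r0 that unfolding W_def by auto
  have Wint: "integrable lborel (\<lambda>x. nd x * W i x)" if "i < k" for i
    using integral_dens(1)[OF WP0[OF that, unfolded P0_def] v0(1) v0(2)] by (simp add: dens_Nil)
  have W0: "(\<integral>x. nd x * W i x \<partial>lborel) = 0" if "i < k" for i
  proof -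
    have "(\<integral>y. V r0 y i \<partial>P0) = 0" using Viff P0c r0 that by (auto simp: r0_def)
    then show ?thesis using integral_dens(2)[OF WP0[OF that, unfolded P0_def] v0(1) v0(2)]
      by (simp add: dens_Nil W_def P0_def)
  qed
  define a where "a t i = (\<integral>x. nd x * W i x * gt t x \<partial>lborel)" for t i
  define C where "C = (\<Sum>i<k. \<integral>x. \<bar>nd x * W i x\<bar> \<partial>lborel)"
  have C0: "0 \<le> C" unfolding C_def by (intro sum_nonneg integral_nonneg_AE) auto
  have abnd: "\<bar>a t i\<bar> \<le> C * t" if t: "0 < t" "t \<le> 1" and i: "i < k" for t i
  proof -
    have "\<bar>a t i\<bar> \<le> (\<integral>x. \<bar>nd x * W i x * gt t x\<bar> \<partial>lborel)"
      unfolding a_def by (rule integral_abs_bound)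
    also have "\<dots> \<le> (\<integral>x. t * \<bar>nd x * W i x\<bar> \<partial>lborel)"
    proof (rule integral_mono)
      show "integrable lborel (\<lambda>x. \<bar>nd x * W i x * gt t x\<bar>)"
        using int_term[OF Wint[OF i] t] by (rule integrable_abs)
      show "integrable lborel (\<lambda>x. t * \<bar>nd x * W i x\<bar>)"
        using Wint[OF i] by (intro integrable_mult_right integrable_abs)
      fix x show "\<bar>nd x * W i x * gt t x\<bar> \<le> t * \<bar>nd x * W i x\<bar>"
      proof -
        have "\<bar>nd x * W i x * gt t x\<bar> = \<bar>nd x * W i x\<bar> * \<bar>gt t x\<bar>" by (simp add: abs_mult)
        also have "\<dots> \<le> \<bar>nd x * W i x\<bar> * t" using t_bounds(1)[OF t(1), of x] by (intro mult_left_mono) auto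
        finally show ?thesis by (simp add: mult.commute)
      qed
    qed
    also have "\<dots> = t * (\<integral>x. \<bar>nd x * W i x\<bar> \<partial>lborel)" by simp
    also have "\<dots> \<le> t * C"
      unfolding C_def using i t
      by (intro mult_left_mono member_le_sum[of i "{..<k}"]) (auto intro: integral_nonneg_AE)
    finally show ?thesis by (simp add: mult.commute)
  qed
  obtain cs where cs: "\<forall>p\<in>set cs. 0 < fst p \<and> fst p \<le> 1" "wsum cs (\<lambda>_. 1) = 1"
    "\<forall>i<k. wsum cs (\<lambda>t. a t i) = 0"
    using LA_gen[OF C0, of k a 1] abnd by auto
  have vcs: "valid cs" using cs(1) by (simp add: valid_def)
  define \<kappa> where "\<kappa> = 1 / (40 * (tw cs + 1))"
  have tw0: "0 \<le> tw cs" using tw_nonneg[OF vcs] .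
  have \<kappa>: "0 < \<kappa>" using tw0 by (simp add: \<kappa>_def)
  define cs' where "cs' = scl \<kappa> cs"
  have v1: "valid cs'" using vcs by (simp add: cs'_def valid_scl)
  have "tw cs' = tw cs / (40 * (tw cs + 1))" using \<kappa> by (simp add: cs'_def tw_scl \<kappa>_def)
  also have "\<dots> \<le> 1/40" using tw0 by (simp add: field_simps)
  finally have v2: "tw cs' \<le> 1/40" .
  have mass: "wsum cs' (\<lambda>_. 1) > 0" using cs(2) \<kappa> by (simp add: cs'_def)
  have zero: "wsum cs' (\<lambda>t. a t i) = 0" if "i < k" for i using cs(3) that by (simp add: cs'_def)
  define P1 where "P1 = density lborel (\<lambda>x. ennreal (dens cs' x))"
  obtain c1 where P1c: "P1 \<in> mode_class" and m1: "mode P1 = c1" and c1': "wsum cs' (\<lambda>_. 1) > 0 \<Longrightarrow> c1 > 0"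
    using dens_class[OF v1 v2] unfolding P1_def by blast
  have c1: "c1 > 0" using c1' mass by simp
  have "(\<integral>y. V r0 y i \<partial>P1) = 0" if i: "i < k" for i
  proof -
    have WP1: "integrable P1 (W i)" using Vint P1c r0 i unfolding W_def by auto
    have "(\<integral>y. V r0 y i \<partial>P1) = (\<integral>x. dens cs' x * W i x \<partial>lborel)"
      using integral_dens(2)[OF WP1[unfolded P1_def] v1 v2] by (simp add: W_def P1_def)
    also have "\<dots> = (\<integral>x. nd x * W i x + nd x * W i x * Gs cs' x \<partial>lborel)"
    proof -
      have "dens cs' x * W i x = nd x * W i x + nd x * W i x * Gs cs' x" for x
        unfolding dens_def by (simp add: distrib_left distrib_right)
      then show ?thesis by simp
    qed
    also have "\<dots> = (\<integral>x. nd x * W i x \<partial>lborel) + (\<integral>x. nd x * W i x * Gs cs' x \<partial>lborel)"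
      using int_lin[OF Wint[OF i] v1] Wint[OF i] by (simp add: Bochner_Integration.integral_add)
    also have "\<dots> = 0"
      using int_lin[OF Wint[OF i] v1] W0[OF i] zero[OF i] by (simp add: a_def)
    finally show ?thesis .
  qed
  then have "\<Gamma>h P1 = r0" using Viff P1c r0 by auto
  then have "mode P1 = mode P0" using fm P0c P1c by (simp add: r0_def)
  then show False using m0 m1 c0 c1 by simp
qed

end
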